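(* Let $\Lambda$ be a $k$-graph with no sinks such that $\Lambda^0$ is finite. Then for every $v\in\Lambda^0$ there exist $w\in\Lambda^0$ and $\alpha\in w\Lambda w$ such that $d(\alpha)>0$ and $w\Lambda v\ne\emptyset$.
   Context: A $k$-graph is a countable category $\Lambda$ with a functor $d:\Lambda\to\mathbb{N}^k$ with unique factorisation (for each $\lambda$ and $d(\lambda)=m+n$ there are unique $\mu,\nu$ with $d(\mu)=m$, $d(\nu)=n$, $\lambda=\mu\nu$); $\Lambda^n=d^{-1}(n)$, $\Lambda^0$ = vertices, $uXv=\{\lambda\in X:r(\lambda)=u,s(\lambda)=v\}$. No sinks: $\Lambda^nv\ne\emptyset$ for all $v\in\Lambda^0$ and nonzero $n\in\mathbb{N}^k$. For $m\in\mathbb{N}^k$, $m>0$ means $m_i>0$ for all $i$. *)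

theory Defs
  imports "HOL-Library.Countable_Set"
begin

text \<open>Elements of N^k are
 represented as functions nat => nat vanishing outside {..<k}.\<close>

definition deg_vec :: "nat \<Rightarrow> (nat \<Rightarrow> nat) \<Rightarrow> bool" where
  "deg_vec k n \<longleftrightarrow> (\<forall>i\<ge>k. n i = 0)"

definition is_kgraph ::
  "nat \<Rightarrow> 'v set \<Rightarrow> 'a set \<Rightarrow> ('a \<Rightarrow> 'v) \<Rightarrow> ('a \<Rightarrow> 'v) \<Rightarrow>
   ('a \<Rightarrow> 'a \<Rightarrow> 'a) \<Rightarrow> ('v \<Rightarrow> 'a) \<Rightarrow> ('a \<Rightarrow> nat \<Rightarrow> nat) \<Rightarrow> bool" where
  "is_kgraph k V Mor r s cmp ident d \<longleftrightarrow>
     countable Mor \<and>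
     (\<forall>l\<in>Mor. r l \<in> V \<and> s l \<in> V) \<and>
     (\<forall>v\<in>V. ident v \<in> Mor \<and> r (ident v) = v \<and> s (ident v) = v) \<and>
     (\<forall>l\<in>Mor. \<forall>m\<in>Mor. s l = r m \<longrightarrow>
         cmp l m \<in> Mor \<and> r (cmp l m) = r l \<and> s (cmp l m) = s m) \<and>
     (\<forall>l\<in>Mor. \<forall>m\<in>Mor. \<forall>n\<in>Mor. s l = r m \<longrightarrow> s m = r n \<longrightarrow>
         cmp (cmp l m) n = cmp l (cmp m n)) \<and>
     (\<forall>l\<in>Mor. cmp (ident (r l)) l = l \<and> cmp l (ident (s l)) = l) \<and>
     (\<forall>l\<in>Mor. deg_vec k (d l)) \<and>
     (\<forall>v\<in>V. d (ident v) = (\<lambda>i. 0)) \<and>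
     (\<forall>l\<in>Mor. \<forall>m\<in>Mor. s l = r m \<longrightarrow> d (cmp l m) = (\<lambda>i. d l i + d m i)) \<and>
     (\<forall>l\<in>Mor. \<forall>m n. deg_vec k m \<longrightarrow> deg_vec k n \<longrightarrow> d l = (\<lambda>i. m i + n i) \<longrightarrow>
         (\<exists>!p. fst p \<in> Mor \<and> snd p \<in> Mor \<and> s (fst p) = r (snd p) \<and>
               d (fst p) = m \<and> d (snd p) = n \<and> l = cmp (fst p) (snd p)))"

definition no_sinks ::
  "nat \<Rightarrow> 'v set \<Rightarrow> 'a set \<Rightarrow> ('a \<Rightarrow> 'v) \<Rightarrow> ('a \<Rightarrow> nat \<Rightarrow> nat) \<Rightarrow> bool" where
  "no_sinks k V Mor s d \<longleftrightarrow>
     (\<forall>v\<in>V. \<forall>n. deg_vec k n \<longrightarrow> n \<noteq> (\<lambda>i. 0) \<longrightarrow> (\<exists>l\<in>Mor. d l = n \<and> s l = v))"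

end

theory Submission
  imports Defs
begin

theorem lemma2p9:
  fixes k :: nat and V :: "'v set" and Mor :: "'a set"
    and r s :: "'a \<Rightarrow> 'v" and cmp :: "'a \<Rightarrow> 'a \<Rightarrow> 'a"
    and ident :: "'v \<Rightarrow> 'a" and d :: "'a \<Rightarrow> nat \<Rightarrow> nat"
  assumes "is_kgraph k V Mor r s cmp ident d"
    and "no_sinks k V Mor s d"
    and "finite V"
    and "v \<in> V"
  shows "\<exists>w\<in>V. \<exists>\<alpha>\<in>Mor. r \<alpha> = w \<and> s \<alpha> = w \<and> (\<forall>i<k. d \<alpha> i > 0) \<and>
           (\<exists>\<mu>\<in>Mor. r \<mu> = w \<and> s \<mu> = v)"
proof (cases "k = 0")
  case True
  have "\<forall>v\<in>V. ident v \<in> Mor \<and> r (ident v) = v \<and> s (ident v) = v"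
    using assms(1)[unfolded is_kgraph_def] by (rule conjunct1[OF conjunct2[OF conjunct2]])
  then have "ident v \<in> Mor" "r (ident v) = v" "s (ident v) = v" using assms(4) by auto
  then show ?thesis using True assms(4) by blast
next
  case False
  have K1: "\<forall>l\<in>Mor. r l \<in> V \<and> s l \<in> V"
    and K2: "\<forall>v\<in>V. ident v \<in> Mor \<and> r (ident v) = v \<and> s (ident v) = v"
    and K3: "\<forall>l\<in>Mor. \<forall>m\<in>Mor. s l = r m \<longrightarrow>
         cmp l m \<in> Mor \<and> r (cmp l m) = r l \<and> s (cmp l m) = s m"
    and K4: "\<forall>v\<in>V. d (ident v) = (\<lambda>i. 0)"
    and K5: "\<forall>l\<in>Mor. \<forall>m\<in>Mor. s l = r m \<longrightarrow> d (cmp l m) = (\<lambda>i. d l i + d m i)"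
  proof -
    note KK = assms(1)[unfolded is_kgraph_def]
    show "\<forall>l\<in>Mor. r l \<in> V \<and> s l \<in> V" using KK by (rule conjunct1[OF conjunct2])
    show "\<forall>v\<in>V. ident v \<in> Mor \<and> r (ident v) = v \<and> s (ident v) = v"
      using KK by (rule conjunct1[OF conjunct2[OF conjunct2]])
    show "\<forall>l\<in>Mor. \<forall>m\<in>Mor. s l = r m \<longrightarrow>
         cmp l m \<in> Mor \<and> r (cmp l m) = r l \<and> s (cmp l m) = s m"
      using KK by (rule conjunct1[OF conjunct2[OF conjunct2[OF conjunct2]]])
    show "\<forall>v\<in>V. d (ident v) = (\<lambda>i. 0)"
      using KK by (rule conjunct1[OF conjunct2[OF conjunct2[OF conjunct2[OF conjunct2[OF conjunct2[OF conjunct2[OF conjunct2]]]]]]])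
    show "\<forall>l\<in>Mor. \<forall>m\<in>Mor. s l = r m \<longrightarrow> d (cmp l m) = (\<lambda>i. d l i + d m i)"
      using KK by (rule conjunct1[OF conjunct2[OF conjunct2[OF conjunct2[OF conjunct2[OF conjunct2[OF conjunct2[OF conjunct2[OF conjunct2]]]]]]]])
  qed
  define n where "n = (\<lambda>i::nat. if i < k then (1::nat) else 0)"
  have dn: "deg_vec k n" unfolding n_def deg_vec_def by auto
  have nz: "n \<noteq> (\<lambda>i. 0)" using False unfolding n_def by (metis neq0_conv one_neq_zero)
  have "\<forall>x\<in>V. \<exists>l\<in>Mor. d l = n \<and> s l = x"
    using assms(2) dn nz unfolding no_sinks_def by blast
  then obtain g where g: "\<And>x. x\<in>V \<Longrightarrow> g x \<in> Mor \<and> d (g x) = n \<and> s (g x) = x"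
    by metis
  define f where "f j = ((r \<circ> g) ^^ j) v" for j
  have fV: "f j \<in> V" for j
  proof (induction j)
    case 0 then show ?case using assms(4) by (simp add: f_def)
  next
    case (Suc j)
    have "f (Suc j) = r (g (f j))" by (simp add: f_def)
    then show ?case using g[OF Suc] K1 by auto
  qed
  have fS: "f (Suc j) = r (g (f j))" for j by (simp add: f_def)
  have path: "\<exists>p\<in>Mor. s p = f j \<and> r p = f (j + t) \<and> d p = (\<lambda>i. t * n i)" for j t
  proof (induction t)
    case 0
    have "ident (f j) \<in> Mor \<and> s (ident (f j)) = f j \<and> r (ident (f j)) = f j
          \<and> d (ident (f j)) = (\<lambda>i. 0)" using K2 K4 fV by blast
    then show ?case by auto
  next
    case (Suc t)
    then obtain p where p: "p\<in>Mor" "s p = f j" "r p = f (j + t)" "d p = (\<lambda>i. t * n i)" by blast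
    let ?e = "g (f (j+t))"
    have e: "?e \<in> Mor" "d ?e = n" "s ?e = f (j+t)" using g fV by auto
    have se: "s ?e = r p" using e p by simp
    have c1: "cmp ?e p \<in> Mor \<and> r (cmp ?e p) = r ?e \<and> s (cmp ?e p) = s p"
      using K3 e(1) p(1) se by blast
    have c2: "d (cmp ?e p) = (\<lambda>i. d ?e i + d p i)"
      using K5 e(1) p(1) se by blast
    have "r ?e = f (j + Suc t)" using fS[of "j+t"] by simp
    moreover have "d (cmp ?e p) = (\<lambda>i. Suc t * n i)" using c2 e(2) p(4) by simp
    ultimately show ?case using c1 p(2) by (intro bexI[of _ "cmp ?e p"]) simp_all
  qed
  have fr: "finite (range f)"
    using fV assms(3) by (meson finite_subset image_subsetI)
  have "\<not> inj f"
  proof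
    assume "inj f"
    from finite_imageD[OF fr this] show False by simp
  qed
  then obtain a0 b0 where ab0: "f a0 = f b0" "a0 \<noteq> b0" unfolding inj_def by blast
  obtain a b where ab: "f a = f b" "a < b"
  proof (cases "a0 < b0")
    case True then show ?thesis using ab0 that by blast
  next
    case False then have "b0 < a0" using ab0(2) by simp
    then show ?thesis using ab0(1) that[of b0 a0] by simp
  qed
  obtain \<alpha> where al: "\<alpha>\<in>Mor" "s \<alpha> = f a" "r \<alpha> = f (a + (b - a))" "d \<alpha> = (\<lambda>i. (b-a) * n i)"
    using path by blast
  obtain \<mu> where mu: "\<mu>\<in>Mor" "s \<mu> = f 0" "r \<mu> = f (0 + a)"
    using path by blast
  have f0: "f 0 = v" by (simp add: f_def)
  have pos: "\<forall>i<k. d \<alpha> i > 0" using al(4) ab(2) by (simp add: n_def)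
  have ra: "r \<alpha> = f a" using al(3) ab by simp
  have rm: "r \<mu> = f a" "s \<mu> = v" using mu f0 by simp_all
  show ?thesis
    apply (rule bexI[of _ "f a"])
     apply (rule bexI[of _ \<alpha>])
      using ra al(2) pos rm mu(1) apply blast
     apply (rule al(1))
    apply (rule fV)
    done
qed

end
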